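(* Let $X_1,\dots,X_\ell$ be variables for complex square matrices, $\iota:[k]\to[\ell]$ and $\tau:[k]\to\{1,*\}$, and let $P=\prod_{j\in[k]}X_{\iota(j)}^{\tau(j)}$. Then for every $n\in\mathbb N$ and every choice of $A_1,\dots,A_\ell\in\mathbb C^{n\times n}$ all eigenvalues of $P(A_1,\dots,A_\ell)$ are real if and only if $P$ is self-adjoint.
   Context: $X^*$ denotes the Hermitian adjoint (conjugate transpose). Formal adjoint acts on words by $(X_i^1)^*=X_i^*$, $(X_i^* )^*=X_i$, $(W_1W_2)^*=W_2^*W_1^*$. $P(A_1,\dots,A_\ell)$ is obtained by substituting $A_i$ for $X_i$ and $A_i^*$ for $X_i^*$ and multiplying. $P$ is called self-adjoint if $k$ is even and there exists $j\in[k]$ such that, with indices modulo $k$, the cyclically shifted word $\prod_{i=j+1}^{j+k}X_{\iota(i)}^{\tau(i)}$ equals $LL^*$ as a formal word, where $L=\prod_{i=j+1}^{j+k/2}X_{\iota(i)}^{\tau(i)}$. *)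

theory Defs
  imports "Jordan_Normal_Form.Schur_Decomposition" "Jordan_Normal_Form.Char_Poly"
begin

text \<open>A word P = prod_{j in [k]} X_{iota j}^{tau j} is encoded as a list of letters
  (iota j, tau j) :: nat \<times> bool, where the index is 0-based (i < l stands for X_{i+1})
  and the boolean is True iff the letter is starred (X^*), False iff it is X^1.\<close>

type_synonym word = "(nat \<times> bool) list"

definition word_adjoint :: "word \<Rightarrow> word" where
  "word_adjoint w = rev (map (\<lambda>(i, s). (i, \<not> s)) w)"

text \<open>Self-adjointness: k even and some cyclic shift equals L L^*, L its first half.
  rotate j w is the word starting at (1-based) letter j+1; j ranges over [k] (j = k
  gives the same shift as j = 0).\<close>
definition self_adjoint_word :: "word \<Rightarrow> bool" where
  "self_adjoint_word w \<longleftrightarrow> even (length w) \<and>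
     (\<exists>j < length w. let L = take (length w div 2) (rotate j w)
                      in rotate j w = L @ word_adjoint L)"

definition eval_word :: "nat \<Rightarrow> (nat \<Rightarrow> complex mat) \<Rightarrow> word \<Rightarrow> complex mat" where
  "eval_word n A w = foldr (\<lambda>(i, s) M. (if s then mat_adjoint (A i) else A i) * M) w (1\<^sub>m n)"

end

theory Submission
  imports Defs
begin

lemma adj_carrier: "A \<in> carrier_mat n m \<Longrightarrow> mat_adjoint A \<in> carrier_mat m n"
  unfolding mat_adjoint_def by auto

lemma adj_index: "(A :: complex mat) \<in> carrier_mat n m \<Longrightarrow> i < m \<Longrightarrow> j < n \<Longrightarrow>
   mat_adjoint A $$ (i,j) = cnj (A $$ (j,i))"
  unfolding mat_adjoint_def by (auto simp: mat_of_rows_def)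

lemma adj_adj: assumes "(A :: complex mat) \<in> carrier_mat n m" shows "mat_adjoint (mat_adjoint A) = A"
proof -
  have C: "mat_adjoint A \<in> carrier_mat m n" by (rule adj_carrier[OF assms])
  show ?thesis
    by (rule eq_matI, insert assms adj_carrier[OF C] C, auto simp: adj_index[OF C] adj_index[OF assms])
qed

lemma adj_mult: fixes A :: "complex mat"
  assumes "A \<in> carrier_mat n m" "B \<in> carrier_mat m p"
  shows "mat_adjoint (A * B) = mat_adjoint B * mat_adjoint A"
proof (rule eq_matI)
  have AB: "A * B \<in> carrier_mat n p" using assms by auto
  show "dim_row (mat_adjoint (A * B)) = dim_row (mat_adjoint B * mat_adjoint A)"
    using adj_carrier[OF AB] adj_carrier[OF assms(2)] by auto
  show "dim_col (mat_adjoint (A * B)) = dim_col (mat_adjoint B * mat_adjoint A)"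
    using adj_carrier[OF AB] adj_carrier[OF assms(1)] by auto
  fix i j assume ij: "i < dim_row (mat_adjoint B * mat_adjoint A)" "j < dim_col (mat_adjoint B * mat_adjoint A)"
  then have i: "i < p" and j: "j < n" using adj_carrier[OF assms(1)] adj_carrier[OF assms(2)] by auto
  show "mat_adjoint (A * B) $$ (i, j) = (mat_adjoint B * mat_adjoint A) $$ (i, j)"
    using i j assms adj_carrier[OF assms(1)] adj_carrier[OF assms(2)]
    by (auto simp: adj_index[OF AB] adj_index[OF assms(1)] adj_index[OF assms(2)] scalar_prod_def
       cnj_sum intro!: sum.cong)
qed

definition tog :: "nat \<times> bool \<Rightarrow> nat \<times> bool" where "tog x = (fst x, \<not> snd x)"

definition lm :: "(nat \<Rightarrow> complex mat) \<Rightarrow> nat \<times> bool \<Rightarrow> complex mat" where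
  "lm A x = (if snd x then mat_adjoint (A (fst x)) else A (fst x))"

lemma eval_Nil[simp]: "eval_word n A [] = 1\<^sub>m n" by (simp add: eval_word_def)
lemma eval_Cons[simp]: "eval_word n A (x # v) = lm A x * eval_word n A v"
  by (cases x, simp add: eval_word_def lm_def)

lemma lm_carrier: "A (fst x) \<in> carrier_mat n n \<Longrightarrow> lm A x \<in> carrier_mat n n"
  by (auto simp: lm_def adj_carrier)

lemma eval_carrier: "\<forall>x\<in>set v. A (fst x) \<in> carrier_mat n n \<Longrightarrow> eval_word n A v \<in> carrier_mat n n"
  by (induction v) (auto intro!: mult_carrier_mat lm_carrier)

lemma eval_append: "\<forall>x\<in>set u. A (fst x) \<in> carrier_mat n n \<Longrightarrow> \<forall>x\<in>set v. A (fst x) \<in> carrier_mat n n \<Longrightarrow>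
  eval_word n A (u @ v) = eval_word n A u * eval_word n A v"
proof (induction u)
  case Nil
  then show ?case using eval_carrier[of v A n] by simp
next
  case (Cons x u)
  then show ?case using eval_carrier[of v A n] eval_carrier[of u A n] lm_carrier[of A x n]
    by (simp add: assoc_mult_mat[of _ n n _ n _ n])
qed

lemma lm_tog: "A (fst x) \<in> carrier_mat n n \<Longrightarrow> lm A (tog x) = mat_adjoint (lm A x)"
  by (auto simp: lm_def tog_def adj_adj)

lemma adj_one: "mat_adjoint (1\<^sub>m n :: complex mat) = 1\<^sub>m n"
  by (rule eq_matI, insert adj_carrier[of "1\<^sub>m n :: complex mat" n n], auto simp: adj_index[of _ n n])

lemma word_adjoint_Cons: "word_adjoint (x # L) = word_adjoint L @ [tog x]"
  by (cases x, simp add: word_adjoint_def tog_def)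

lemma word_adjoint_set: "y \<in> set (word_adjoint L) \<Longrightarrow> \<exists>x\<in>set L. fst y = fst x"
  by (force simp: word_adjoint_def)

lemma eval_adjoint: "\<forall>x\<in>set L. A (fst x) \<in> carrier_mat n n \<Longrightarrow>
  eval_word n A (word_adjoint L) = mat_adjoint (eval_word n A L)"
proof (induction L)
  case Nil
  then show ?case by (simp add: word_adjoint_def adj_one)
next
  case (Cons x L)
  have c1: "\<forall>y\<in>set (word_adjoint L). A (fst y) \<in> carrier_mat n n"
    using Cons.prems word_adjoint_set by fastforce
  have c2: "\<forall>y\<in>set [tog x]. A (fst y) \<in> carrier_mat n n" using Cons.prems by (simp add: tog_def)
  have lx: "lm A x \<in> carrier_mat n n" using Cons.prems lm_carrier by auto
  have eL: "eval_word n A L \<in> carrier_mat n n" using Cons.prems eval_carrier by auto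
  have "eval_word n A (word_adjoint (x # L)) = eval_word n A (word_adjoint L) * eval_word n A [tog x]"
    unfolding word_adjoint_Cons by (rule eval_append[OF c1 c2])
  also have "\<dots> = mat_adjoint (eval_word n A L) * mat_adjoint (lm A x)"
    using Cons lm_tog[of A x n] lx adj_carrier[OF lx] by simp
  also have "\<dots> = mat_adjoint (eval_word n A (x # L))"
    using adj_mult[OF lx eL] by simp
  finally show ?case .
qed

lemma eigen_swap: fixes U V :: "complex mat"
  assumes U: "U \<in> carrier_mat n n" and V: "V \<in> carrier_mat n n"
    and e: "eigenvalue (U * V) \<mu>" and mu: "\<mu> \<noteq> 0"
  shows "eigenvalue (V * U) \<mu>"
proof -
  from e obtain v where v: "v \<in> carrier_vec n" "v \<noteq> 0\<^sub>v n" "(U * V) *\<^sub>v v = \<mu> \<cdot>\<^sub>v v"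
    unfolding eigenvalue_def eigenvector_def using U by auto
  have Vv: "V *\<^sub>v v \<in> carrier_vec n" using V v by auto
  have 1: "U *\<^sub>v (V *\<^sub>v v) = \<mu> \<cdot>\<^sub>v v" using v U V by simp
  have "(V * U) *\<^sub>v (V *\<^sub>v v) = V *\<^sub>v (U *\<^sub>v (V *\<^sub>v v))" using U V Vv by simp
  also have "\<dots> = \<mu> \<cdot>\<^sub>v (V *\<^sub>v v)" unfolding 1 using V v by (simp add: mult_mat_vec)
  finally have 2: "(V * U) *\<^sub>v (V *\<^sub>v v) = \<mu> \<cdot>\<^sub>v (V *\<^sub>v v)" .
  have "V *\<^sub>v v \<noteq> 0\<^sub>v n"
  proof
    assume "V *\<^sub>v v = 0\<^sub>v n"
    moreover have "U *\<^sub>v 0\<^sub>v n = 0\<^sub>v n" using U by (intro eq_vecI, auto simp: scalar_prod_def)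
    ultimately have z: "\<mu> \<cdot>\<^sub>v v = 0\<^sub>v n" using 1 by simp
    have "v = inverse \<mu> \<cdot>\<^sub>v (\<mu> \<cdot>\<^sub>v v)" using mu by (simp add: smult_smult_assoc)
    then have "v = 0\<^sub>v n" unfolding z by (metis eq_vecI index_smult_vec(1,2) index_zero_vec(1,2) mult_zero_right)
    then show False using v by simp
  qed
  then show ?thesis unfolding eigenvalue_def eigenvector_def using Vv 2 V U by auto
qed

lemma cnj_sq: "cnj z * z = complex_of_real ((cmod z)^2)"
  by (metis complex_norm_square mult.commute of_real_power)

lemma gram_real: fixes B :: "complex mat"
  assumes B: "B \<in> carrier_mat n n" and e: "eigenvalue (B * mat_adjoint B) \<mu>"
  shows "\<mu> \<in> \<real>"
proof -
  have Bs: "mat_adjoint B \<in> carrier_mat n n" using adj_carrier[OF B] .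
  from e obtain v where v: "v \<in> carrier_vec n" "v \<noteq> 0\<^sub>v n" "(B * mat_adjoint B) *\<^sub>v v = \<mu> \<cdot>\<^sub>v v"
    unfolding eigenvalue_def eigenvector_def using B Bs by auto
  define u where "u = mat_adjoint B *\<^sub>v v"
  have u: "u \<in> carrier_vec n" using Bs v unfolding u_def by auto
  have Bu: "B *\<^sub>v u = \<mu> \<cdot>\<^sub>v v" using v B Bs unfolding u_def by simp
  have uj: "u $ j = (\<Sum>i<n. cnj (B $$ (i,j)) * v $ i)" if "j < n" for j
    using that Bs v unfolding u_def by (auto simp: scalar_prod_def adj_index[OF B] lessThan_atLeast0)
  define r where "r = (\<Sum>i<n. cnj (v $ i) * (B *\<^sub>v u) $ i)"
  have "r = (\<Sum>i<n. \<Sum>j<n. cnj (v $ i) * B $$ (i,j) * u $ j)"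
    unfolding r_def using B u by (auto simp: scalar_prod_def sum_distrib_left lessThan_atLeast0 mult.assoc intro!: sum.cong)
  also have "\<dots> = (\<Sum>j<n. (\<Sum>i<n. cnj (v $ i) * B $$ (i,j)) * u $ j)"
    by (subst sum.swap) (simp add: sum_distrib_right)
  also have "\<dots> = (\<Sum>j<n. cnj (u $ j) * u $ j)"
    by (rule sum.cong, simp, subst uj, auto simp: cnj_sum mult.commute)
  also have "\<dots> = of_real (\<Sum>j<n. (cmod (u $ j))^2)"
    by (simp only: of_real_sum cnj_sq)
  finally have r1: "Im r = 0" by simp
  have "r = \<mu> * (\<Sum>i<n. cnj (v $ i) * v $ i)"
    unfolding r_def Bu using v by (simp add: sum_distrib_left mult.commute mult.left_commute)
  also have "(\<Sum>i<n. cnj (v $ i) * v $ i) = of_real (\<Sum>i<n. (cmod (v $ i))^2)"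
    by (simp only: of_real_sum cnj_sq)
  finally have r2: "Im r = Im \<mu> * (\<Sum>i<n. (cmod (v $ i))^2)" by simp
  obtain i where i: "i < n" "v $ i \<noteq> 0" using v by (metis eq_vecI carrier_vecD index_zero_vec(1,2))
  have "(\<Sum>i<n. (cmod (v $ i))^2) > 0"
    by (rule sum_pos2[of _ i], insert i, auto)
  then have "Im \<mu> = 0" using r1 r2 by simp
  then show ?thesis using complex_is_Real_iff by blast
qed

definition tr :: "complex mat \<Rightarrow> complex" where "tr A = (\<Sum>i<dim_row A. A $$ (i,i))"

lemma tr_comm: assumes X: "X \<in> carrier_mat n m" and Y: "Y \<in> carrier_mat m n"
  shows "tr (X * Y) = tr (Y * X)"
proof -
  have "tr (X * Y) = (\<Sum>i<n. \<Sum>j<m. X $$ (i,j) * Y $$ (j,i))"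
    unfolding tr_def using X Y by (auto simp: scalar_prod_def lessThan_atLeast0 intro!: sum.cong)
  also have "\<dots> = (\<Sum>j<m. \<Sum>i<n. Y $$ (j,i) * X $$ (i,j))"
    by (subst sum.swap) (simp add: mult.commute)
  also have "\<dots> = tr (Y * X)"
    unfolding tr_def using X Y by (auto simp: scalar_prod_def lessThan_atLeast0 intro!: sum.cong)
  finally show ?thesis .
qed

lemma trace_real: fixes A :: "complex mat"
  assumes A: "A \<in> carrier_mat n n" and ev: "\<forall>\<mu>. eigenvalue A \<mu> \<longrightarrow> \<mu> \<in> \<real>"
  shows "tr A \<in> \<real>"
proof -
  obtain es where es: "char_poly A = (\<Prod>a\<leftarrow>es. [:- a, 1:])" using char_poly_factorized[OF A] by auto
  obtain B where B: "B \<in> carrier_mat n n" "upper_triangular B" "similar_mat A B"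
    using schur_decomposition_exists[OF A es] by auto
  have cp: "char_poly A = (\<Prod>a\<leftarrow>diag_mat B. [:- a, 1:])"
    using char_poly_similar[OF B(3)] char_poly_upper_triangular[OF B(1) B(2)] by simp
  have diag: "B $$ (i,i) \<in> \<real>" if i: "i < n" for i
  proof -
    have mem: "B $$ (i,i) \<in> set (diag_mat B)" using i B(1) unfolding diag_mat_def by auto
    have "poly (char_poly A) (B $$ (i,i)) = 0" unfolding cp poly_prod_list
      using mem by (auto simp: prod_list_zero_iff)
    then have "eigenvalue A (B $$ (i,i))" using eigenvalue_root_char_poly[OF A] by simp
    then show ?thesis using ev by auto
  qed
  from B(3) obtain P Q where w: "similar_mat_wit A B P Q" unfolding similar_mat_def by auto
  then have PQ: "P \<in> carrier_mat n n" "Q \<in> carrier_mat n n" "Q * P = 1\<^sub>m n" "A = P * B * Q"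
    using A unfolding similar_mat_wit_def Let_def by auto
  have "tr A = tr (P * (B * Q))" using PQ B by (simp add: assoc_mult_mat[of P n n B n Q n])
  also have "\<dots> = tr ((B * Q) * P)" by (rule tr_comm[of _ n n], insert PQ B, auto)
  also have "\<dots> = tr B" using PQ B by (simp add: assoc_mult_mat[of B n n Q n P n])
  finally have "tr A = (\<Sum>i<n. B $$ (i,i))" unfolding tr_def using B by simp
  then show ?thesis using diag by (auto intro!: sum_in_Reals)
qed

lemma easy_dir:
  assumes sa: "self_adjoint_word w" and C: "\<forall>x\<in>set w. A (fst x) \<in> carrier_mat n n"
    and e: "eigenvalue (eval_word n A w) \<mu>"
  shows "\<mu> \<in> \<real>"
proof (cases "\<mu> = 0")
  case True then show ?thesis by simp
next
  case False
  from sa obtain j where j: "j < length w"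
    and eq: "rotate j w = take (length w div 2) (rotate j w) @ word_adjoint (take (length w div 2) (rotate j w))"
    unfolding self_adjoint_word_def Let_def by auto
  define L where "L = take (length w div 2) (rotate j w)"
  define m where "m = j mod length w"
  have Ct: "\<forall>x\<in>set (take m w). A (fst x) \<in> carrier_mat n n" using C by (meson in_set_takeD)
  have Cd: "\<forall>x\<in>set (drop m w). A (fst x) \<in> carrier_mat n n" using C by (meson in_set_dropD)
  have CL: "\<forall>x\<in>set L. A (fst x) \<in> carrier_mat n n" using C unfolding L_def
    by (metis in_set_takeD set_rotate)
  have "eval_word n A w = eval_word n A (take m w) * eval_word n A (drop m w)"
    using eval_append[OF Ct Cd] by simp
  then have "eigenvalue (eval_word n A (drop m w) * eval_word n A (take m w)) \<mu>"
    using eigen_swap[OF eval_carrier[OF Ct] eval_carrier[OF Cd] _ False] e by simp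
  moreover have "eval_word n A (drop m w) * eval_word n A (take m w) = eval_word n A (rotate j w)"
    unfolding m_def rotate_drop_take using eval_append[OF Cd Ct, unfolded m_def] by simp
  moreover have "eval_word n A (rotate j w) = eval_word n A L * mat_adjoint (eval_word n A L)"
    using eq eval_append[OF CL, of "word_adjoint L"] eval_adjoint[OF CL] word_adjoint_set CL
    unfolding L_def[symmetric] by (metis (no_types, lifting))
  ultimately show ?thesis using gram_real[OF eval_carrier[OF CL]] by simp
qed

definition om :: "nat \<Rightarrow> complex" where "om k = cis (pi / (2 * real k))"

definition Acon :: "word \<Rightarrow> nat \<Rightarrow> complex mat" where
  "Acon w i = mat (length w) (length w) (\<lambda>(a,b).
     (if b = Suc a mod length w \<and> w ! a = (i, False) then om (length w) else 0) +
     (if a = Suc b mod length w \<and> w ! b = (i, True) then cnj (om (length w)) else 0))"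

lemma Acon_carrier: "Acon w i \<in> carrier_mat (length w) (length w)"
  unfolding Acon_def by simp

lemma lm_Acon: assumes "a < length w" "b < length w"
  shows "lm (Acon w) x $$ (a,b) =
     (if b = Suc a mod length w \<and> w ! a = x then om (length w) else 0) +
     (if a = Suc b mod length w \<and> w ! b = tog x then cnj (om (length w)) else 0)"
proof (cases x)
  case (Pair i s)
  then show ?thesis
  proof (cases s)
    case True
    have "lm (Acon w) x $$ (a,b) = cnj (Acon w i $$ (b,a))"
      using Pair True assms by (simp add: lm_def adj_index[OF Acon_carrier])
    then show ?thesis using Pair True assms by (simp add: Acon_def tog_def)
  next
    case False
    then show ?thesis using Pair assms by (simp add: Acon_def tog_def lm_def)
  qed
qed

lemma suc_mod: "c < k \<Longrightarrow> Suc c mod k = (if Suc c = k then 0 else Suc c)"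
  by auto

lemma pred_mod: "(a::nat) < k \<Longrightarrow> (a + k - 1) mod k = (if a = 0 then k - 1 else a - 1)"
proof -
  assume a: "a < k"
  show ?thesis
  proof (cases "a = 0")
    case True
    have "k - 1 < k" using a by arith
    then show ?thesis using True by simp
  next
    case False
    then have "a + k - 1 = (a - 1) + k" by simp
    moreover have "((a - 1) + k) mod k = a - 1" using a by (metis mod_add_self2 mod_less less_imp_diff_less)
    ultimately show ?thesis using False by simp
  qed
qed

lemma pred_iff: "a < k \<Longrightarrow> c < k \<Longrightarrow> (a = Suc c mod k) = (c = (a + k - 1) mod k)"
proof -
  assume a: "a < k" and c: "c < k"
  show ?thesis unfolding pred_mod[OF a] suc_mod[OF c] using a c by auto
qed

lemma mult_step:
  assumes N: "N \<in> carrier_mat (length w) (length w)" and a: "a < length w" and b: "b < length w"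
  shows "(lm (Acon w) x * N) $$ (a,b) =
    (if w ! a = x then om (length w) * N $$ (Suc a mod length w, b) else 0) +
    (if w ! ((a + length w - 1) mod length w) = tog x
       then cnj (om (length w)) * N $$ ((a + length w - 1) mod length w, b) else 0)" (is "_ = ?rhs")
proof -
  let ?k = "length w"
  have lmc: "lm (Acon w) x \<in> carrier_mat ?k ?k" by (rule lm_carrier, rule Acon_carrier)
  have "(lm (Acon w) x * N) $$ (a,b) = (\<Sum>c<?k. lm (Acon w) x $$ (a,c) * N $$ (c,b))"
    using lmc N a b by (auto simp: scalar_prod_def lessThan_atLeast0 intro!: sum.cong)
  also have "\<dots> = (\<Sum>c<?k. (if c = Suc a mod ?k then (if w ! a = x then om ?k * N $$ (c,b) else 0) else 0)
        + (if c = (a + ?k - 1) mod ?k then (if w ! c = tog x then cnj (om ?k) * N $$ (c,b) else 0) else 0))"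
    by (rule sum.cong, simp, subst lm_Acon, insert a, auto simp: pred_iff distrib_right)
  also have "\<dots> = (\<Sum>c<?k. (if c = Suc a mod ?k then (if w ! a = x then om ?k * N $$ (c,b) else 0) else 0))
        + (\<Sum>c<?k. (if c = (a + ?k - 1) mod ?k then (if w ! c = tog x then cnj (om ?k) * N $$ (c,b) else 0) else 0))"
    by (rule sum.distrib)
  also have "\<dots> = ?rhs"
  proof -
    have k0: "0 < ?k" using a by linarith
    have "Suc a mod ?k < ?k" "(a + ?k - 1) mod ?k < ?k" using k0 by auto
    then show ?thesis by (simp add: sum.delta del: One_nat_def)
  qed
  finally show ?thesis .
qed

fun cnt :: "word \<Rightarrow> word \<Rightarrow> int \<Rightarrow> int \<Rightarrow> nat" where
  "cnt w [] x d = (if d = 0 then 1 else 0)"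
| "cnt w (l # v) x d =
     (if w ! nat (x mod int (length w)) = l then cnt w v (x + 1) (d - 1) else 0) +
     (if w ! nat ((x - 1) mod int (length w)) = tog l then cnt w v (x - 1) (d + 1) else 0)"

lemma h0: "0 < k \<Longrightarrow> nat (x mod int k) < k"
  by (simp add: nat_less_iff)

lemma h1: assumes k: "0 < k" shows "Suc (nat (x mod int k)) mod k = nat ((x + 1) mod int k)"
proof -
  have "int (Suc (nat (x mod int k)) mod k) = (x mod int k + 1) mod int k"
    using k by (simp add: of_nat_mod add.commute)
  also have "\<dots> = (x + 1) mod int k" by (simp add: mod_add_left_eq)
  finally show ?thesis using k by (metis nat_int)
qed

lemma h2: assumes k: "0 < k" shows "(nat (x mod int k) + k - 1) mod k = nat ((x - 1) mod int k)"
proof -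
  have "int ((nat (x mod int k) + k - 1) mod k) = (x mod int k + int k - 1) mod int k"
    using k by (simp add: of_nat_mod of_nat_diff)
  also have "\<dots> = (x mod int k + (int k - 1)) mod int k" by (simp add: algebra_simps)
  also have "\<dots> = (x + (int k - 1)) mod int k" by (simp add: mod_add_left_eq)
  also have "\<dots> = ((x - 1) + int k) mod int k" by (simp add: algebra_simps)
  also have "\<dots> = (x - 1) mod int k" by simp
  finally show ?thesis using k by (metis nat_int)
qed

lemma om_nz: "om k \<noteq> 0" by (simp add: om_def)

lemma om_cnj: "cnj (om k) * om k = 1"
  by (simp add: cnj_sq om_def)

lemma powi_shift1: "(z::complex) \<noteq> 0 \<Longrightarrow> z * z powi (d - 1) = z powi d"
proof -
  assume z: "z \<noteq> 0"
  have "z powi d = z powi ((d - 1) + 1)" by simp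
  also have "\<dots> = z powi (d - 1) * z powi 1" using power_int_add[of z "d - 1" 1] z by blast
  finally show ?thesis by (simp add: mult.commute)
qed

lemma powi_shift2: "(z::complex) \<noteq> 0 \<Longrightarrow> cnj z * z = 1 \<Longrightarrow> cnj z * z powi (d + 1) = z powi d"
proof -
  assume z: "z \<noteq> 0" and c: "cnj z * z = 1"
  have "z powi (d + 1) = z powi d * z" using z by (simp add: power_int_add)
  then show ?thesis using c by (simp add: mult.commute mult.left_commute)
qed

lemma eval_Acon_carrier: "eval_word (length w) (Acon w) v \<in> carrier_mat (length w) (length w)"
  by (rule eval_carrier, simp add: Acon_carrier)

lemma reidx_m: "finite S \<Longrightarrow> sum f ((\<lambda>d::int. d - 1) ` S) = (\<Sum>d\<in>S. f (d - 1))"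
  by (subst sum.reindex, auto simp: inj_on_def)

lemma reidx_p: "finite S \<Longrightarrow> sum f ((\<lambda>d::int. d + 1) ` S) = (\<Sum>d\<in>S. f (d + 1))"
  by (subst sum.reindex, auto simp: inj_on_def)

lemma split_sum: "(\<Sum>d\<in>S. if P d then (of_nat ((if c1 then f d else 0) + (if c2 then g d else 0)) :: complex) * z d else 0)
  = (if c1 then (\<Sum>d\<in>S. if P d then of_nat (f d) * z d else 0) else 0)
  + (if c2 then (\<Sum>d\<in>S. if P d then of_nat (g d) * z d else 0) else 0)"
proof -
  have e: "\<And>d. (if P d then (of_nat ((if c1 then f d else 0) + (if c2 then g d else 0)) :: complex) * z d else 0)
     = (if c1 then (if P d then of_nat (f d) * z d else 0) else 0) + (if c2 then (if P d then of_nat (g d) * z d else 0) else 0)"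
    by (auto simp: distrib_right)
  show ?thesis unfolding e sum.distrib by (cases c1; cases c2; simp)
qed

lemma eval_cnt:
  assumes k: "0 < length w"
  shows "finite S \<Longrightarrow> {- int (length v) .. int (length v)} \<subseteq> S \<Longrightarrow> b < length w \<Longrightarrow>
   eval_word (length w) (Acon w) v $$ (nat (x mod int (length w)), b) =
   (\<Sum>d\<in>S. if (x + d) mod int (length w) = int b
            then of_nat (cnt w v x d) * om (length w) powi d else 0)"
proof (induction v arbitrary: x S)
  case Nil
  let ?k = "length w"
  have a: "nat (x mod int ?k) < ?k" using h0[OF k] .
  have "(\<Sum>d\<in>S. if (x + d) mod int ?k = int b then of_nat (cnt w [] x d) * om ?k powi d else 0)
     = (\<Sum>d\<in>S. if d = 0 then (if x mod int ?k = int b then 1 else 0) else 0)"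
    by (rule sum.cong, auto)
  also have "\<dots> = (if x mod int ?k = int b then 1 else 0)"
  proof -
    have "0 \<in> S" using Nil.prems(2) by auto
    then show ?thesis by (subst sum.delta[OF Nil.prems(1)], simp)
  qed
  finally have r: "(\<Sum>d\<in>S. if (x + d) mod int ?k = int b then of_nat (cnt w [] x d) * om ?k powi d else 0)
     = (if x mod int ?k = int b then 1 else 0)" .
  have "x mod int ?k \<ge> 0" using k by simp
  then have "(nat (x mod int ?k) = b) = (x mod int ?k = int b)" by (simp only: nat_eq_iff, simp)
  then show ?case unfolding r using a Nil.prems(3) by simp
next
  case (Cons l v x S)
  let ?k = "length w"
  let ?w = "om ?k"
  let ?E = "eval_word ?k (Acon w) v"
  define a where "a = nat (x mod int ?k)"
  have ak: "a < ?k" unfolding a_def using h0[OF k] .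
  have "eval_word ?k (Acon w) (l # v) $$ (a, b) = (lm (Acon w) l * ?E) $$ (a, b)" by simp
  also have "\<dots> = (if w ! a = l then ?w * ?E $$ (nat ((x + 1) mod int ?k), b) else 0) +
     (if w ! nat ((x - 1) mod int ?k) = tog l then cnj ?w * ?E $$ (nat ((x - 1) mod int ?k), b) else 0)"
    unfolding mult_step[OF eval_Acon_carrier ak Cons.prems(3)] unfolding a_def h1[OF k] h2[OF k] ..
  finally have L: "eval_word ?k (Acon w) (l # v) $$ (a, b) = \<dots>" .
  define F1 where "F1 = (\<lambda>d. if (x + 1 + d) mod int ?k = int b then of_nat (cnt w v (x + 1) d) * ?w powi d else 0)"
  define F2 where "F2 = (\<lambda>d. if (x - 1 + d) mod int ?k = int b then of_nat (cnt w v (x - 1) d) * ?w powi d else 0)"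
  have S1: "{- int (length v) .. int (length v)} \<subseteq> (\<lambda>d. d - 1) ` S"
  proof
    fix e assume "e \<in> {- int (length v) .. int (length v)}"
    then have "e + 1 \<in> S" using Cons.prems(2) by auto
    then show "e \<in> (\<lambda>d. d - 1) ` S" by force
  qed
  have S2: "{- int (length v) .. int (length v)} \<subseteq> (\<lambda>d. d + 1) ` S"
  proof
    fix e assume "e \<in> {- int (length v) .. int (length v)}"
    then have "e - 1 \<in> S" using Cons.prems(2) by auto
    then show "e \<in> (\<lambda>d. d + 1) ` S" by force
  qed
  have I1: "?E $$ (nat ((x + 1) mod int ?k), b) = sum F1 ((\<lambda>d. d - 1) ` S)"
    unfolding F1_def by (rule Cons.IH, insert Cons.prems S1, auto)
  have I2: "?E $$ (nat ((x - 1) mod int ?k), b) = sum F2 ((\<lambda>d. d + 1) ` S)"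
    unfolding F2_def by (rule Cons.IH, insert Cons.prems S2, auto)
  have R1: "?w * sum F1 ((\<lambda>d. d - 1) ` S) =
     (\<Sum>d\<in>S. if (x + d) mod int ?k = int b then of_nat (cnt w v (x + 1) (d - 1)) * ?w powi d else 0)"
    unfolding reidx_m[OF Cons.prems(1)] sum_distrib_left F1_def
    by (rule sum.cong, simp, auto simp: powi_shift1[OF om_nz] mult.left_commute)
  have R2: "cnj ?w * sum F2 ((\<lambda>d. d + 1) ` S) =
     (\<Sum>d\<in>S. if (x + d) mod int ?k = int b then of_nat (cnt w v (x - 1) (d + 1)) * ?w powi d else 0)"
    unfolding reidx_p[OF Cons.prems(1)] sum_distrib_left F2_def
    by (rule sum.cong, simp, auto simp: powi_shift2[OF om_nz om_cnj] mult.left_commute)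
  have C: "(\<Sum>d\<in>S. if (x + d) mod int ?k = int b then of_nat (cnt w (l # v) x d) * ?w powi d else 0)
    = (if w ! a = l then (\<Sum>d\<in>S. if (x + d) mod int ?k = int b then of_nat (cnt w v (x + 1) (d - 1)) * ?w powi d else 0) else 0)
    + (if w ! nat ((x - 1) mod int ?k) = tog l then (\<Sum>d\<in>S. if (x + d) mod int ?k = int b then of_nat (cnt w v (x - 1) (d + 1)) * ?w powi d else 0) else 0)"
    unfolding cnt.simps(2) a_def
    by (rule split_sum[of "\<lambda>d. (x + d) mod int ?k = int b" _ "\<lambda>d. cnt w v (x + 1) (d - 1)" _ "\<lambda>d. cnt w v (x - 1) (d + 1)" "\<lambda>d. ?w powi d" S])
  show ?case
    unfolding a_def[symmetric] L C
    by (cases "w ! a = l"; cases "w ! nat ((x - 1) mod int ?k) = tog l")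
       (simp_all only: I1 I2 R1 R2 if_True if_False)
qed

lemma tog_tog[simp]: "tog (tog x) = x" by (simp add: tog_def)
lemma tog_eq: "(tog x = y) = (x = tog y)" by (auto simp: tog_def)
lemma tog_neq: "tog x \<noteq> x" by (simp add: tog_def prod_eq_iff)

lemma cnt_zero: "\<bar>d\<bar> > int (length v) \<Longrightarrow> cnt w v x d = 0"
  by (induction v arbitrary: x d) auto

lemma all_Suc: "(\<forall>t<Suc m. P t) = (P 0 \<and> (\<forall>t<m. P (Suc t)))"
  using less_Suc_eq_0_disj by auto

lemma cnt_fwd: "cnt w v x (int (length v)) =
  (if \<forall>t<length v. v ! t = w ! nat ((x + int t) mod int (length w)) then 1 else 0)"
proof (induction v arbitrary: x)
  case Nil then show ?case by simp
next
  case (Cons l v x)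
  have z: "cnt w v (x - 1) (int (length (l # v)) + 1) = 0" by (rule cnt_zero) simp
  have e: "(\<forall>t<length (l # v). (l # v) ! t = w ! nat ((x + int t) mod int (length w))) =
    (l = w ! nat (x mod int (length w)) \<and> (\<forall>t<length v. v ! t = w ! nat ((x + 1 + int t) mod int (length w))))"
    unfolding length_Cons all_Suc by (simp add: add.assoc)
  show ?case using Cons.IH[of "x + 1"] z unfolding e by auto
qed

lemma cnt_bwd: "cnt w v x (- int (length v)) =
  (if \<forall>t<length v. v ! t = tog (w ! nat ((x - 1 - int t) mod int (length w))) then 1 else 0)"
proof (induction v arbitrary: x)
  case Nil then show ?case by simp
next
  case (Cons l v x)
  have z: "cnt w v (x + 1) (- int (length (l # v)) - 1) = 0" by (rule cnt_zero) simp
  have e: "(\<forall>t<length (l # v). (l # v) ! t = tog (w ! nat ((x - 1 - int t) mod int (length w)))) =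
    (w ! nat ((x - 1) mod int (length w)) = tog l \<and> (\<forall>t<length v. v ! t = tog (w ! nat ((x - 1 - 1 - int t) mod int (length w)))))"
    unfolding length_Cons all_Suc by (auto simp: tog_eq algebra_simps)
  have e2: "- int (length (l # v)) + 1 = - int (length v)" by simp
  show ?case using Cons.IH[of "x - 1"] z unfolding e by (auto simp: e2)
qed

lemma om_pow: "0 < k \<Longrightarrow> om k ^ k = \<i>"
proof -
  assume k: "0 < k"
  have "om k ^ k = cis (real k * (pi / (2 * real k)))" unfolding om_def by (rule DeMoivre)
  also have "real k * (pi / (2 * real k)) = pi / 2" using k by (simp add: field_simps)
  finally show ?thesis by simp
qed

lemma dvd_range: fixes d :: int assumes k: "0 < k" and dv: "k dvd d" and r: "- k \<le> d" "d \<le> k"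
  shows "d = - k \<or> d = 0 \<or> d = k"
proof -
  obtain q where q: "d = k * q" using dv by (auto simp: dvd_def)
  have "q \<le> 1"
  proof (rule ccontr)
    assume "\<not> q \<le> 1" then have "q \<ge> 2" by simp
    then have "k * q \<ge> k * 2" using k by (simp add: mult_left_mono)
    then show False using q r k by simp
  qed
  moreover have "q \<ge> -1"
  proof (rule ccontr)
    assume "\<not> q \<ge> -1" then have "q \<le> -2" by simp
    then have "k * q \<le> k * (-2)" using k mult_left_mono[of q "-2" k] by simp
    then show False using q r k by simp
  qed
  ultimately have "q = -1 \<or> q = 0 \<or> q = 1" by auto
  then show ?thesis using q by auto
qed

lemma diag_entry:
  assumes k: "0 < length w" and a: "a < length w"
  shows "eval_word (length w) (Acon w) w $$ (a, a) =
    of_nat (cnt w w (int a) (- int (length w))) * om (length w) powi (- int (length w))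
    + of_nat (cnt w w (int a) 0)
    + of_nat (cnt w w (int a) (int (length w))) * om (length w) powi (int (length w))"
proof -
  let ?k = "length w"
  define g where "g = (\<lambda>d. if (int a + d) mod int ?k = int a
            then of_nat (cnt w w (int a) d) * om ?k powi d else (0::complex))"
  have na: "nat (int a mod int ?k) = a" using a by (simp add: zmod_int)
  have "eval_word ?k (Acon w) w $$ (a, a) = sum g {- int ?k .. int ?k}"
    using eval_cnt[OF k, of "{- int ?k .. int ?k}" w a "int a"] a unfolding na g_def by simp
  also have "\<dots> = sum g {- int ?k, 0, int ?k}"
  proof (rule sum.mono_neutral_right)
    show "finite {- int ?k .. int ?k}" by simp
    show "{- int ?k, 0, int ?k} \<subseteq> {- int ?k .. int ?k}" by auto
    show "\<forall>d\<in>{- int ?k .. int ?k} - {- int ?k, 0, int ?k}. g d = 0"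
    proof
      fix d assume d: "d \<in> {- int ?k .. int ?k} - {- int ?k, 0, int ?k}"
      have "(int a + d) mod int ?k \<noteq> int a"
      proof
        assume "(int a + d) mod int ?k = int a"
        then have "(int a + d) mod int ?k = int a mod int ?k" using a by (simp add: zmod_int)
        then have "int ?k dvd d" by (simp add: mod_eq_dvd_iff)
        then show False using dvd_range[of "int ?k" d] d k by auto
      qed
      then show "g d = 0" unfolding g_def by simp
    qed
  qed
  also have "\<dots> = g (- int ?k) + g 0 + g (int ?k)" using k by simp
  also have "\<dots> = of_nat (cnt w w (int a) (- int (length w))) * om (length w) powi (- int (length w))
    + of_nat (cnt w w (int a) 0)
    + of_nat (cnt w w (int a) (int (length w))) * om (length w) powi (int (length w))"
  proof -
    have m0: "int a mod int ?k = int a" using a by (simp add: zmod_int)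
    have m1: "(int a + - int ?k) mod int ?k = int a" using m0 by (simp add: mod_diff_right_eq[symmetric])
    have m2: "(int a + int ?k) mod int ?k = int a" using m0 by simp
    show ?thesis unfolding g_def using m0 m1 m2 by simp
  qed
  finally show ?thesis .
qed

lemma wa_nth: "i < length L \<Longrightarrow> word_adjoint L ! i = tog (L ! (length L - Suc i))"
  unfolding word_adjoint_def by (simp add: rev_nth tog_def split: prod.splits)

lemma wa_length[simp]: "length (word_adjoint L) = length L"
  unfolding word_adjoint_def by simp

lemma mod_self_int: "0 \<le> t \<Longrightarrow> t < k \<Longrightarrow> (t::int) mod k = t" by simp

lemma refl_sa:
  assumes k: "0 < length w" and a: "a < length w"
    and H: "\<forall>t<length w. w ! t = tog (w ! nat ((int a - 1 - int t) mod int (length w)))"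
  shows "self_adjoint_word w"
proof -
  let ?k = "length w"
  have nofix: "\<not> (int a - 1 - int t) mod int ?k = int t" if t: "t < ?k" for t
  proof
    assume e: "(int a - 1 - int t) mod int ?k = int t"
    have "w ! t = tog (w ! nat ((int a - 1 - int t) mod int ?k))" using H t by blast
    then have "w ! t = tog (w ! t)" unfolding e by simp
    then show False using tog_neq by metis
  qed
  have kev: "even ?k"
  proof (rule ccontr)
    assume od: "odd ?k"
    define X where "X = (int a - 1) * ((int ?k + 1) div 2)"
    define t where "t = nat (X mod int ?k)"
    have t: "t < ?k" unfolding t_def using k by (simp add: nat_less_iff)
    have ti: "int t = X mod int ?k" unfolding t_def using k by simp
    have two: "2 * ((int ?k + 1) div 2) = int ?k + 1" using od by (simp add: even_iff_mod_2_eq_zero) presburger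
    have "2 * X = (int a - 1) * (int ?k + 1)" unfolding X_def using two by (simp add: algebra_simps)
    have "(int a - 1 - int t) mod int ?k = int t mod int ?k"
    proof (subst mod_eq_dvd_iff)
      have "int a - 1 - int t - int t = (int a - 1) - 2 * X + 2 * (int ?k * (X div int ?k))"
        unfolding ti by (simp add: minus_mod_eq_mult_div[symmetric] algebra_simps)
      also have "\<dots> = int ?k * (2 * (X div int ?k) - (int a - 1))"
        using \<open>2 * X = _\<close> by (simp add: algebra_simps)
      finally show "int ?k dvd int a - 1 - int t - int t" by simp
    qed
    then show False using nofix[OF t] t by simp
  qed
  have aev: "even a"
  proof (rule ccontr)
    assume od: "odd a"
    define t where "t = (a - 1) div 2"
    have t2: "2 * t = a - 1" using od unfolding t_def by presburger
    have t: "t < ?k" using a t2 by linarith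
    have "int a - 1 - int t = int t" using t2 od by (cases a) auto
    then show False using nofix[OF t] t by simp
  qed
  define j where "j = a div 2"
  define h where "h = ?k div 2"
  have a2: "a = 2 * j" unfolding j_def using aev by simp
  have k2: "?k = 2 * h" unfolding h_def using kev by simp
  have j: "j < ?k" using a a2 by simp
  define L where "L = take h (rotate j w)"
  have Ll: "length L = h" unfolding L_def using k2 by simp
  have eq: "rotate j w = L @ word_adjoint L"
  proof (rule nth_equalityI)
    show "length (rotate j w) = length (L @ word_adjoint L)" using Ll k2 by simp
    fix t assume "t < length (rotate j w)"
    then have t: "t < ?k" by simp
    show "rotate j w ! t = (L @ word_adjoint L) ! t"
    proof (cases "t < h")
      case True
      have "(L @ word_adjoint L) ! t = L ! t" using True Ll by (simp add: nth_append)
      also have "L ! t = rotate j w ! t" unfolding L_def using True by simp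
      finally show ?thesis by simp
    next
      case False
      define t' where "t' = (j + t) mod ?k"
      have t'k: "t' < ?k" unfolding t'_def using k by simp
      have r1: "rotate j w ! t = w ! t'" unfolding t'_def using t by (simp add: nth_rotate)
      have "(L @ word_adjoint L) ! t = word_adjoint L ! (t - h)" using False Ll by (simp add: nth_append)
      also have "\<dots> = tog (L ! (h - Suc (t - h)))" using False Ll t k2 by (simp add: wa_nth)
      also have "\<dots> = tog (rotate j w ! (h - Suc (t - h)))" unfolding L_def using False t k2 by simp
      also have "\<dots> = tog (w ! ((j + (h - Suc (t - h))) mod ?k))" using False t k2 by (simp add: nth_rotate)
      finally have r2: "(L @ word_adjoint L) ! t = tog (w ! ((j + (h - Suc (t - h))) mod ?k))" .
      have "nat ((int a - 1 - int t') mod int ?k) = (j + (h - Suc (t - h))) mod ?k"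
      proof -
        have "int ((j + (h - Suc (t - h))) mod ?k) = int (j + (h - Suc (t - h))) mod int ?k"
          by (simp add: zmod_int)
        also have "int (j + (h - Suc (t - h))) = int j + int ?k - 1 - int t" using False t k2 by simp
        also have "(int j + int ?k - 1 - int t) mod int ?k = (int a - 1 - int t') mod int ?k"
        proof (subst mod_eq_dvd_iff)
          have "int t' = (int j + int t) mod int ?k" unfolding t'_def by (simp add: zmod_int)
          then have "int j + int ?k - 1 - int t - (int a - 1 - int t') = int ?k - int ?k * ((int j + int t) div int ?k)"
            unfolding a2 by (simp add: minus_mod_eq_mult_div[symmetric] algebra_simps)
          also have "\<dots> = int ?k * (1 - (int j + int t) div int ?k)" by (simp add: algebra_simps)
          finally show "int ?k dvd int j + int ?k - 1 - int t - (int a - 1 - int t')" by simp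
        qed
        finally show ?thesis by simp
      qed
      then show ?thesis unfolding r1 r2 using H t'k by metis
    qed
  qed
  show ?thesis unfolding self_adjoint_word_def Let_def
    using kev j eq unfolding L_def h_def by auto
qed

lemma im_tr: assumes k: "0 < length w"
  shows "Im (tr (eval_word (length w) (Acon w) w)) =
    (\<Sum>a<length w. real (cnt w w (int a) (int (length w))) - real (cnt w w (int a) (- int (length w))))"
proof -
  let ?k = "length w"
  have p1: "om ?k powi (int ?k) = \<i>" using om_pow[OF k] by (simp add: power_int_of_nat)
  have p2: "om ?k powi (- int ?k) = - \<i>" using p1 by (simp add: power_int_minus)
  have "tr (eval_word ?k (Acon w) w) = (\<Sum>a<?k. eval_word ?k (Acon w) w $$ (a, a))"
    unfolding tr_def using eval_Acon_carrier[of w w] by simp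
  then show ?thesis
    by (simp add: Im_sum diag_entry[OF k] p1 p2 om_pow[OF k] sum_subtractf sum_negf)
qed

lemma hard_dir:
  assumes w: "w \<noteq> []"
    and H: "\<forall>\<mu>. eigenvalue (eval_word (length w) (Acon w) w) \<mu> \<longrightarrow> \<mu> \<in> \<real>"
  shows "self_adjoint_word w"
proof (rule ccontr)
  assume nsa: "\<not> self_adjoint_word w"
  let ?k = "length w"
  have k: "0 < ?k" using w by simp
  have "tr (eval_word ?k (Acon w) w) \<in> \<real>"
    by (rule trace_real[OF eval_Acon_carrier H])
  then have im0: "Im (tr (eval_word ?k (Acon w) w)) = 0" by (simp add: complex_is_Real_iff)
  have b0: "cnt w w (int a) (- int ?k) = 0" if a: "a < ?k" for a
  proof (rule ccontr)
    assume "cnt w w (int a) (- int ?k) \<noteq> 0"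
    then have "\<forall>t<?k. w ! t = tog (w ! nat ((int a - 1 - int t) mod int ?k))"
      using cnt_bwd[of w w "int a"] by (auto split: if_splits)
    then show False using refl_sa[OF k a] nsa by blast
  qed
  have f0: "cnt w w (int 0) (int ?k) = 1"
    using cnt_fwd[of w w 0] by (simp add: zmod_int)
  have "Im (tr (eval_word ?k (Acon w) w)) = (\<Sum>a<?k. real (cnt w w (int a) (int ?k)))"
    unfolding im_tr[OF k] using b0 by simp
  also have "\<dots> \<ge> real (cnt w w (int 0) (int ?k))"
    by (rule member_le_sum, insert k, auto)
  finally show False using f0 im0 by simp
qed

theorem mainTheorem6:
  fixes w :: word and l :: nat
  assumes "w \<noteq> []"
    and "\<forall>(i, s) \<in> set w. i < l"
  shows "(\<forall>n \<ge> 1. \<forall>A :: nat \<Rightarrow> complex mat.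
            (\<forall>i < l. A i \<in> carrier_mat n n) \<longrightarrow>
            (\<forall>\<mu>. eigenvalue (eval_word n A w) \<mu> \<longrightarrow> \<mu> \<in> \<real>))
         \<longleftrightarrow> self_adjoint_word w"
proof
  assume H: "\<forall>n \<ge> 1. \<forall>A :: nat \<Rightarrow> complex mat.
            (\<forall>i < l. A i \<in> carrier_mat n n) \<longrightarrow>
            (\<forall>\<mu>. eigenvalue (eval_word n A w) \<mu> \<longrightarrow> \<mu> \<in> \<real>)"
  have "length w \<ge> 1" using assms(1) by (cases w) auto
  then have "\<forall>\<mu>. eigenvalue (eval_word (length w) (Acon w) w) \<mu> \<longrightarrow> \<mu> \<in> \<real>"
    using H Acon_carrier by blast
  then show "self_adjoint_word w" by (rule hard_dir[OF assms(1)])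
next
  assume sa: "self_adjoint_word w"
  show "\<forall>n \<ge> 1. \<forall>A :: nat \<Rightarrow> complex mat.
            (\<forall>i < l. A i \<in> carrier_mat n n) \<longrightarrow>
            (\<forall>\<mu>. eigenvalue (eval_word n A w) \<mu> \<longrightarrow> \<mu> \<in> \<real>)"
  proof (intro allI impI)
    fix n :: nat and A :: "nat \<Rightarrow> complex mat" and \<mu>
    assume A: "\<forall>i < l. A i \<in> carrier_mat n n" and e: "eigenvalue (eval_word n A w) \<mu>"
    have C: "\<forall>x\<in>set w. A (fst x) \<in> carrier_mat n n" using A assms(2) by fastforce
    show "\<mu> \<in> \<real>" by (rule easy_dir[OF sa C e])
  qed
qed

end
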